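(* Let $k\ge2$. If $\lambda_1,\dots,\lambda_n\in\Lambda_k$ are distinct, then $1,\lambda_1^{-1},\dots,\lambda_n^{-1}$ are linearly independent over $\mathbb{Q}$.
   Context: For an integer $k\ge2$, \[ \Lambda_k:=\Big\{(b_1^{k+1}b_2^{k+2}\cdots b_{k-1}^{2k-1})^{1/k}\ \Big|\ b_1,\dots,b_{k-1}\in\mathbb{Z}_{\ge1},\ b_1\cdots b_{k-1}\ge2,\ b_1\cdots b_{k-1}\text{ squarefree}\Big\}. \] *)

theory Defs
  imports Complex_Main "HOL-Computational_Algebra.Squarefree"
begin

definition Lambda :: "nat \<Rightarrow> real set" where
  "Lambda k = { root k (\<Prod>i\<in>{1..k-1}. real (b i) ^ (k + i)) | b :: nat \<Rightarrow> nat.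
      (\<forall>i\<in>{1..k-1}. b i \<ge> 1) \<and> (\<Prod>i\<in>{1..k-1}. b i) \<ge> 2 \<and> squarefree (\<Prod>i\<in>{1..k-1}. b i) }"

end

theory Submission
  imports Defs Jordan_Normal_Form.Char_Poly
begin

lemma of_real_of_rat_c: "complex_of_real (of_rat c) = of_rat c"
  by (cases c) (simp add: of_rat_rat)

lemma prod_lin_root: "a \<in> set as \<Longrightarrow> poly (\<Prod>b\<leftarrow>as. [:- b, 1:]) (a::complex) = 0"
  by (induction as) auto

lemma prod_lin_zero: "(\<forall>a\<in>set as. cmod a = z) \<Longrightarrow> cmod (poly (\<Prod>b\<leftarrow>as. [:- b, 1:]) 0) = z ^ length as"
  by (induction as) (auto simp: norm_mult)

interpretation mpq: map_poly_inj_idom_hom "of_rat :: rat \<Rightarrow> complex" ..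

lemma map_poly_of_rat_mult: "map_poly (of_rat :: rat \<Rightarrow> complex) (p * q) = map_poly of_rat p * map_poly of_rat q"
  by (rule mpq.hom_mult)

lemma poly_binom: "poly (map_poly (of_rat :: rat \<Rightarrow> complex) (monom 1 t - [:c:])) x = x ^ t - of_rat c"
proof -
  have "map_poly (of_rat :: rat \<Rightarrow> complex) [:c:] = [:of_rat c:]"
    by (cases "c = 0") (auto simp: map_poly_pCons)
  then show ?thesis by (simp add: mpq.hom_minus poly_monom)
qed

lemma no_small_root:
  fixes z :: real and t :: nat and c :: rat and g :: "rat poly"
  assumes z: "z > 0" and t: "t > 0" and zt: "z ^ t = of_rat c"
    and minimal: "\<And>s. 0 < s \<Longrightarrow> s < t \<Longrightarrow> z ^ s \<notin> \<rat>"
    and g: "g \<noteq> 0" "degree g < t"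
    and lam: "(l::complex) ^ t = of_rat c"
  shows "poly (map_poly of_rat g) l \<noteq> 0"
proof
  assume gl: "poly (map_poly of_rat g) l = 0"
  let ?D = "\<lambda>h::rat poly. h \<noteq> 0 \<and> poly (map_poly of_rat h) l = 0"
  obtain h where hD: "?D h" and hmin: "\<And>h'. ?D h' \<Longrightarrow> degree h \<le> degree h'"
    using ex_has_least_nat[of ?D g degree] g gl by blast
  have hdeg: "degree h < t" using hmin[of g] g gl by auto
  define f :: "rat poly" where "f = monom 1 t - [:c:]"
  have fl: "poly (map_poly of_rat f) l = 0"
    using lam by (simp add: f_def poly_binom)
  have fne: "f \<noteq> 0"
  proof
    assume "f = 0"
    then have "coeff f t = 0" by simp
    then show False using t by (cases t) (auto simp: f_def)
  qed
  have "f mod h = 0"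
  proof (rule ccontr)
    assume r: "f mod h \<noteq> 0"
    have "f = (f div h) * h + f mod h" by simp
    then have "poly (map_poly of_rat f) l = poly (map_poly of_rat (f div h)) l * poly (map_poly of_rat h) l + poly (map_poly of_rat (f mod h)) l"
      by (metis map_poly_of_rat_mult mpq.hom_add poly_add poly_mult)
    then have "?D (f mod h)" using r fl hD by simp
    then have "degree h \<le> degree (f mod h)" by (rule hmin)
    moreover have "degree (f mod h) < degree h" using degree_mod_less' hD r by blast
    ultimately show False by simp
  qed
  then obtain q where fq: "f = h * q" by (metis dvd_eq_mod_eq_0 dvdE)
  have roots: "cmod \<mu> = z" if "poly (map_poly of_rat h) \<mu> = 0" for \<mu>
  proof -
    have "poly (map_poly of_rat f) \<mu> = 0" using that fq by (simp add: map_poly_of_rat_mult)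
    then have "\<mu> ^ t = of_rat c"
      by (simp add: f_def poly_binom)
    then have "cmod \<mu> ^ t = norm (of_rat c :: complex)" by (metis norm_power)
    also have "norm (of_rat c :: complex) = norm (of_rat c :: real)"
      by (metis norm_of_real of_real_of_rat_c real_norm_def)
    also have "\<dots> = z ^ t"
    proof -
      have "0 < z ^ t" using z by simp
      then have "0 < c" using zt by (metis of_rat_less_0_iff not_less order.strict_trans1 order.refl zero_less_of_rat_iff)
      then show ?thesis using zt by simp
    qed
    finally show ?thesis using t z by (metis norm_ge_zero less_imp_le power_eq_imp_eq_base)
  qed
  obtain as where fa: "Polynomial.smult (lead_coeff (map_poly of_rat h)) (\<Prod>a\<leftarrow>as. [:- a, 1:]) = map_poly (of_rat :: rat \<Rightarrow> complex) h"
     and len: "length as = degree (map_poly (of_rat :: rat \<Rightarrow> complex) h)"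
    using fundamental_theorem_algebra_factorized by blast
  have lc: "lead_coeff (map_poly (of_rat :: rat \<Rightarrow> complex) h) = of_rat (lead_coeff h)" by simp
  have lcne: "lead_coeff h \<noteq> 0" using hD by simp
  have degh: "degree (map_poly (of_rat :: rat \<Rightarrow> complex) h) = degree h" by simp
  have asr: "\<forall>a\<in>set as. cmod a = z"
  proof
    fix a assume "a \<in> set as"
    then have "poly (map_poly of_rat h) a = 0"
      using fa[symmetric] prod_lin_root by (metis mult_zero_right poly_smult)
    then show "cmod a = z" by (rule roots)
  qed
  have "poly (map_poly (of_rat :: rat \<Rightarrow> complex) h) 0 = of_rat (coeff h 0)"
    by (simp add: poly_0_coeff_0)
  then have "cmod (of_rat (coeff h 0)) = cmod (of_rat (lead_coeff h)) * z ^ degree h"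
    using fa[symmetric] prod_lin_zero[OF asr] len degh lc by (metis norm_mult poly_smult)
  then have "z ^ degree h = \<bar>of_rat (coeff h 0 / lead_coeff h)\<bar>"
    using lcne by (simp add: of_rat_divide field_simps flip: of_real_of_rat_c)
  then have "z ^ degree h \<in> \<rat>" by (metis Rats_abs_iff Rats_of_rat)
  moreover have "degree h > 0"
  proof (rule ccontr)
    assume "\<not> degree h > 0"
    then obtain a where "h = [:a:]" by (metis degree_eq_zeroE neq0_conv)
    then show False using hD by auto
  qed
  ultimately show False using minimal hdeg by blast
qed

lemma degree_binom: "t > 0 \<Longrightarrow> degree (monom (1::rat) t - [:c:]) = t"
proof -
  assume t: "t > 0"
  have "monom (1::rat) t - [:c:] = monom 1 t + [:-c:]" by simp
  also have "degree \<dots> = degree (monom (1::rat) t)"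
    by (rule degree_add_eq_left) (use t in \<open>simp add: degree_monom_eq\<close>)
  finally show ?thesis by (simp add: degree_monom_eq)
qed

lemma coeff_binom: "coeff (monom (1::rat) t - [:c:]) m = (if m = t then 1 else 0) - (if m = 0 then c else 0)"
  by (cases m) (auto simp: coeff_monom)

lemma rad_support:
  fixes t :: nat and c :: rat and p :: "rat poly"
  assumes t: "t > 0"
    and P: "\<And>g l. g \<noteq> 0 \<Longrightarrow> degree g < t \<Longrightarrow> (l::complex) ^ t = of_rat c \<Longrightarrow> poly (map_poly of_rat g) l \<noteq> 0"
  shows "p \<noteq> 0 \<Longrightarrow> (\<And>l. poly (map_poly (of_rat :: rat \<Rightarrow> complex) p) l = 0 \<Longrightarrow> l ^ t = of_rat c)
    \<Longrightarrow> coeff p j \<noteq> 0 \<Longrightarrow> t dvd j"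
proof (induction "degree p" arbitrary: p j rule: less_induct)
  case (less p)
  show ?case
  proof (cases "degree p = 0")
    case True
    then have "j = 0" using less.prems(3) le_degree by fastforce
    then show ?thesis by simp
  next
    case False
    obtain as where fa: "Polynomial.smult (lead_coeff (map_poly of_rat p)) (\<Prod>a\<leftarrow>as. [:- a, 1:]) = map_poly (of_rat :: rat \<Rightarrow> complex) p"
      and len: "length as = degree (map_poly (of_rat :: rat \<Rightarrow> complex) p)"
      using fundamental_theorem_algebra_factorized by blast
    then have "as \<noteq> []" using False by auto
    then obtain l where "l \<in> set as" by (metis last_in_set)
    then have pl: "poly (map_poly of_rat p) l = 0"
      using fa[symmetric] prod_lin_root by (metis mult_zero_right poly_smult)
    then have lt: "l ^ t = of_rat c" using less.prems(2) by blast
    define f :: "rat poly" where "f = monom 1 t - [:c:]"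
    have degf: "degree f = t" using t by (simp add: f_def degree_binom)
    then have fne: "f \<noteq> 0" using t by auto
    have fl: "poly (map_poly of_rat f) l = 0" using lt by (simp add: f_def poly_binom)
    have "p mod f = 0"
    proof (rule ccontr)
      assume r: "p mod f \<noteq> 0"
      have "p = (p div f) * f + p mod f" by simp
      then have "poly (map_poly of_rat p) l = poly (map_poly of_rat (p div f)) l * poly (map_poly of_rat f) l + poly (map_poly of_rat (p mod f)) l"
        by (metis map_poly_of_rat_mult mpq.hom_add poly_add poly_mult)
      then have "poly (map_poly of_rat (p mod f)) l = 0" using pl fl by simp
      moreover have "degree (p mod f) < t" using degree_mod_less' fne r degf by metis
      ultimately show False using P r lt by blast
    qed
    then have pq: "p = (p div f) * f" by (metis add.right_neutral div_mult_mod_eq)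
    define q where "q = p div f"
    have qne: "q \<noteq> 0" using pq less.prems(1) q_def by auto
    have degq: "degree p = degree q + t" using pq qne fne degf q_def by (metis degree_mult_eq)
    have IHq: "coeff q i \<noteq> 0 \<Longrightarrow> t dvd i" for i
    proof (rule less.hyps[of q i])
      show "degree q < degree p" using degq t by simp
      show "q \<noteq> 0" by (rule qne)
      show "l' ^ t = of_rat c" if "poly (map_poly of_rat q) l' = 0" for l' :: complex
      proof -
        have "poly (map_poly of_rat p) l' = 0"
          using that pq q_def by (metis map_poly_of_rat_mult mult_zero_left poly_mult)
        then show ?thesis using less.prems(2) by blast
      qed
    qed
    have "coeff p j = (\<Sum>i\<le>j. coeff q i * coeff f (j - i))"
      using pq q_def by (metis coeff_mult)
    then obtain i where i: "i \<le> j" "coeff q i * coeff f (j - i) \<noteq> 0"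
      using less.prems(3) by (metis (no_types, lifting) sum.neutral atMost_iff)
    then have "t dvd i" using IHq by auto
    moreover have "j - i = t \<or> j - i = 0"
    proof -
      have "coeff f (j - i) \<noteq> 0" using i(2) by simp
      then show ?thesis unfolding f_def coeff_binom by (auto split: if_splits)
    qed
    ultimately show ?thesis using i(1) by (metis add_diff_inverse_nat diff_is_0_eq dvd_add_right_iff dvd_refl le_antisym not_less)
  qed
qed

lemma prod_lin_coeffs:
  fixes a :: "nat \<Rightarrow> 'a::comm_ring_1"
  shows "degree (\<Prod>i=0..<n. [:- a i, 1:]) \<le> n \<and> coeff (\<Prod>i=0..<n. [:- a i, 1:]) n = 1 \<and>
    (n > 0 \<longrightarrow> coeff (\<Prod>i=0..<n. [:- a i, 1:]) (n - 1) = - (\<Sum>i<n. a i))"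
proof (induction n)
  case 0
  then show ?case by simp
next
  case (Suc n)
  define P where "P = (\<Prod>i=0..<n. [:- a i, 1:])"
  have eq: "(\<Prod>i=0..<Suc n. [:- a i, 1:]) = Polynomial.smult (- a n) P + pCons 0 P"
    by (simp add: P_def mult.commute)
  have dP: "degree P \<le> n" "coeff P n = 1" "n > 0 \<Longrightarrow> coeff P (n - 1) = - (\<Sum>i<n. a i)"
    using Suc.IH[folded P_def] by blast+
  have c0: "coeff P (Suc n) = 0" by (rule coeff_eq_0) (use dP(1) in linarith)
  have "degree (Polynomial.smult (- a n) P + pCons 0 P) \<le> Suc n"
  proof (rule degree_add_le)
    show "degree (Polynomial.smult (- a n) P) \<le> Suc n" using dP(1) degree_smult_le[of "- a n" P] by linarith
    show "degree (pCons 0 P) \<le> Suc n" using dP(1) degree_pCons_le[of 0 P] by linarith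
  qed
  moreover have "coeff (Polynomial.smult (- a n) P + pCons 0 P) (Suc n) = 1" using c0 dP by simp
  moreover have "coeff (Polynomial.smult (- a n) P + pCons 0 P) n = - (\<Sum>i<Suc n. a i)"
  proof (cases n)
    case 0
    then show ?thesis using dP by (simp add: P_def)
  next
    case (Suc m)
    then show ?thesis using dP by simp
  qed
  ultimately show ?case unfolding eq by simp
qed

lemma perm_two_moved:
  fixes n :: nat
  assumes p: "p permutes {0..<n}" and ne: "p \<noteq> id"
  shows "\<exists>i j. i < n \<and> j < n \<and> i \<noteq> j \<and> p i \<noteq> i \<and> p j \<noteq> j"
proof -
  from ne obtain i where i: "p i \<noteq> i" by (auto simp: fun_eq_iff)
  have "i < n"
  proof (rule ccontr)
    assume "\<not> i < n"
    then have "i \<notin> {0..<n}" by simp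
    then have "p i = i" using p by (simp add: permutes_not_in)
    then show False using i by simp
  qed
  have "p (p i) \<noteq> p i"
  proof
    assume "p (p i) = p i"
    then have "p i = i" using permutes_inj[OF p] by (simp add: inj_eq)
    then show False using i by simp
  qed
  moreover have "p i < n"
  proof -
    have "i \<in> {0..<n}" using \<open>i < n\<close> by simp
    then have "p i \<in> {0..<n}" using p by (simp add: permutes_in_image)
    then show ?thesis by simp
  qed
  ultimately show ?thesis using i \<open>i < n\<close> by (intro exI[of _ i] exI[of _ "p i"]) auto
qed

lemma charpoly_coeff_trace:
  fixes A :: "'a::comm_ring_1 mat"
  assumes A: "A \<in> carrier_mat n n" and n: "n > 0"
  shows "coeff (char_poly A) (n - 1) = - (\<Sum>i<n. A $$ (i,i))"
proof -
  define M where "M = char_poly_matrix A"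
  have M: "M \<in> carrier_mat n n" using A by (simp add: M_def)
  have Mij: "M $$ (i,j) = (if i = j then [:- A $$ (i,i), 1:] else [:- A $$ (i,j):])" if "i < n" "j < n" for i j
    using A that by (auto simp: M_def char_poly_matrix_def)
  have "char_poly A = (\<Sum>p \<in> {p. p permutes {0..<n}}. signof p * (\<Prod>i = 0..<n. M $$ (i, p i)))"
    unfolding char_poly_def M_def[symmetric] by (rule det_def'[OF M])
  then have "coeff (char_poly A) (n - 1) = (\<Sum>p \<in> {p. p permutes {0..<n}}. coeff (signof p * (\<Prod>i = 0..<n. M $$ (i, p i))) (n - 1))"
    by (simp add: coeff_sum)
  also have "\<dots> = (\<Sum>p \<in> {id}. coeff (signof p * (\<Prod>i = 0..<n. M $$ (i, p i))) (n - 1))"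
  proof (rule sum.mono_neutral_right)
    show "finite {p. p permutes {0..<n}}" by (simp add: finite_permutations)
    show "{id} \<subseteq> {p. p permutes {0..<n}}" by (simp add: permutes_id)
    show "\<forall>p\<in>{p. p permutes {0..<n}} - {id}. coeff (signof p * (\<Prod>i = 0..<n. M $$ (i, p i))) (n - 1) = 0"
    proof
      fix p assume "p \<in> {p. p permutes {0..<n}} - {id}"
      then have p: "p permutes {0..<n}" "p \<noteq> id" by auto
      obtain i j where ij: "i < n" "j < n" "i \<noteq> j" "p i \<noteq> i" "p j \<noteq> j"
        using perm_two_moved[OF p] by blast
      have pin: "x < n \<Longrightarrow> p x < n" for x using p(1) by (metis atLeastLessThan_iff permutes_in_image zero_le)
      have dle: "degree (M $$ (x, p x)) \<le> (if x \<in> {0..<n} - {i, j} then 1 else 0)" if "x \<in> {0..<n}" for x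
        using that Mij[of x "p x"] pin[of x] ij by auto
      have "degree (\<Prod>i = 0..<n. M $$ (i, p i)) \<le> (\<Sum>x\<in>{0..<n}. degree (M $$ (x, p x)))"
        using degree_prod_sum_le[of "{0..<n}" "\<lambda>x. M $$ (x, p x)"] by (simp add: o_def)
      also have "\<dots> \<le> (\<Sum>x\<in>{0..<n}. (if x \<in> {0..<n} - {i, j} then 1 else 0))"
        by (rule sum_mono) (rule dle)
      also have "\<dots> = card ({0..<n} - {i, j})"
        by (simp add: sum.If_cases) (rule arg_cong[where f=card], auto)
      also have "\<dots> = n - 2" using ij by (simp add: card_Diff_subset)
      finally have "degree (signof p * (\<Prod>i = 0..<n. M $$ (i, p i))) < n - 1"
        using ij by simp
      then show "coeff (signof p * (\<Prod>i = 0..<n. M $$ (i, p i))) (n - 1) = 0"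
        by (rule coeff_eq_0)
    qed
  qed
  also have "\<dots> = coeff (\<Prod>i = 0..<n. [:- A $$ (i,i), 1:]) (n - 1)"
    using Mij by (simp add: signof_id)
  also have "\<dots> = - (\<Sum>i<n. A $$ (i,i))"
    using prod_lin_coeffs[of "\<lambda>i. A $$ (i,i)" n] n by simp
  finally show ?thesis .
qed

lemma trace_zero_rad:
  fixes A :: "rat mat" and c :: rat
  assumes A: "A \<in> carrier_mat d d" and d: "d > 0" and t: "t \<ge> 2"
    and At: "A ^\<^sub>m t = c \<cdot>\<^sub>m 1\<^sub>m d"
    and P: "\<And>g l. g \<noteq> 0 \<Longrightarrow> degree g < t \<Longrightarrow> (l::complex) ^ t = of_rat c \<Longrightarrow> poly (map_poly of_rat g) l \<noteq> 0"
  shows "(\<Sum>i<d. A $$ (i,i)) = 0"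
proof -
  define \<chi> where "\<chi> = char_poly A"
  have dm: "degree \<chi> = d" "coeff \<chi> d = 1" using degree_monic_char_poly[OF A] by (auto simp: \<chi>_def)
  then have chi0: "\<chi> \<noteq> 0" by auto
  define A' where "A' = map_mat (of_rat :: rat \<Rightarrow> complex) A"
  have A': "A' \<in> carrier_mat d d" using A by (simp add: A'_def)
  have roots: "l ^ t = of_rat c" if "poly (map_poly (of_rat :: rat \<Rightarrow> complex) \<chi>) l = 0" for l
  proof -
    have "char_poly A' = map_poly of_rat \<chi>" unfolding A'_def \<chi>_def by (rule of_rat_hom.char_poly_hom[OF A])
    then have "poly (char_poly A') l = 0" using that by simp
    then have "eigenvalue A' l" using eigenvalue_root_char_poly[OF A'] by simp
    then obtain v where ev: "eigenvector A' v l" unfolding eigenvalue_def by blast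
    then have v: "v \<in> carrier_vec d" "v \<noteq> 0\<^sub>v d" "A' *\<^sub>v v = l \<cdot>\<^sub>v v" using A' unfolding eigenvector_def by auto
    have pw: "A' ^\<^sub>m t *\<^sub>v v = l ^ t \<cdot>\<^sub>v v" by (rule eigenvector_pow[OF A' ev])
    have "A' ^\<^sub>m t = map_mat of_rat (A ^\<^sub>m t)" unfolding A'_def by (rule of_rat_hom.mat_hom_pow[OF A, symmetric])
    then have At': "(A' ^\<^sub>m t) $$ (i, j) = (if i = j then of_rat c else 0)" if "i < d" "j < d" for i j
      using that by (simp add: At)
    have "\<exists>i<d. v $ i \<noteq> 0"
    proof (rule ccontr)
      assume "\<not> (\<exists>i<d. v $ i \<noteq> 0)"
      then have "v = 0\<^sub>v d" using v(1) by (intro eq_vecI) auto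
      with v(2) show False by simp
    qed
    then obtain i where i: "i < d" "v $ i \<noteq> 0" by blast
    have "(A' ^\<^sub>m t *\<^sub>v v) $ i = (\<Sum>j\<in>{0..<d}. (A' ^\<^sub>m t) $$ (i, j) * v $ j)"
      using i v(1) A' by (simp add: scalar_prod_def)
    also have "\<dots> = (\<Sum>j\<in>{0..<d}. (if j = i then of_rat c * v $ i else 0))"
      by (rule sum.cong) (use At' i in auto)
    also have "\<dots> = of_rat c * v $ i" using i by simp
    finally have "of_rat c * v $ i = l ^ t * v $ i" using pw i v(1) by simp
    then show ?thesis using i(2) by simp
  qed
  have t0: "t > 0" using t by simp
  have sup: "t dvd j" if "coeff \<chi> j \<noteq> 0" for j
  proof (rule rad_support[where t=t and c=c and p=\<chi> and j=j])
    show "t > 0" by (rule t0)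
    show "poly (map_poly of_rat g) l \<noteq> 0" if "g \<noteq> 0" "degree g < t" "(l::complex) ^ t = of_rat c" for g l
      using that by (rule P)
    show "\<chi> \<noteq> 0" by (rule chi0)
    show "l ^ t = of_rat c" if "poly (map_poly (of_rat :: rat \<Rightarrow> complex) \<chi>) l = 0" for l
      using that by (rule roots)
    show "coeff \<chi> j \<noteq> 0" by (rule that)
  qed
  have "coeff \<chi> (d - 1) = 0"
  proof (rule ccontr)
    assume ne: "coeff \<chi> (d - 1) \<noteq> 0"
    have "t dvd d - 1" using sup ne by blast
    moreover have "t dvd d" using sup dm by simp
    ultimately have "t dvd d - (d - 1)" by (rule dvd_diff_nat[rotated])
    moreover have "d - (d - 1) = 1" using d by simp
    ultimately have "t dvd 1" by simp
    then show False using t by simp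
  qed
  then show ?thesis using charpoly_coeff_trace[OF A d] by (simp add: \<chi>_def)
qed

interpretation Q: vector_space "\<lambda>(q::rat) (x::real). of_rat q * x"
  by unfold_locales (auto simp: algebra_simps of_rat_add of_rat_mult)

lemma trace_functional:
  fixes S :: "real set"
  assumes finS: "finite S" and one: "1 \<in> Q.span S"
    and mult: "\<And>x y. x \<in> Q.span S \<Longrightarrow> y \<in> Q.span S \<Longrightarrow> x * y \<in> Q.span S"
  shows "\<exists>\<tau>::real \<Rightarrow> rat. \<tau> 1 \<noteq> 0 \<and>
     (\<forall>x\<in>Q.span S. \<forall>y\<in>Q.span S. \<tau> (x + y) = \<tau> x + \<tau> y) \<and>
     (\<forall>c. \<forall>x\<in>Q.span S. \<tau> (of_rat c * x) = c * \<tau> x) \<and>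
     (\<forall>z\<in>Q.span S. z > 0 \<longrightarrow> (\<exists>m>0. z ^ m \<in> \<rat>) \<longrightarrow> z \<notin> \<rat> \<longrightarrow> \<tau> z = 0)"
proof -
  define V where "V = Q.span S"
  obtain B where BV: "B \<subseteq> V" and indB: "Q.independent B" and VB: "V \<subseteq> Q.span B"
    using Q.maximal_independent_subset by blast
  have finB: "finite B"
    using Q.independent_span_bound[OF finS indB] BV by (auto simp: V_def)
  have spanB: "Q.span B = V"
  proof
    show "Q.span B \<subseteq> V" unfolding V_def using BV V_def by (metis Q.span_mono Q.span_span)
  qed (rule VB)
  define bs where "bs = sorted_list_of_set B"
  have bsd: "distinct bs" "set bs = B" using finB by (auto simp: bs_def)
  define d where "d = length bs"
  define R where "R = Q.representation B"
  have bsV: "bs ! i \<in> V" if "i < d" for i using that bsd BV d_def by (metis nth_mem subsetD)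
  have Rb: "R (bs ! l) (bs ! i) = (if l = i then 1 else 0)" if "l < d" "i < d" for l i
    using that Q.representation_basis[OF indB, of "bs ! l"] bsd by (auto simp: R_def d_def nth_eq_iff_index_eq)
  have coord: "v = (\<Sum>l<d. of_rat (R v (bs ! l)) * bs ! l)" if "v \<in> V" for v
  proof -
    have "v = (\<Sum>b\<in>B. of_rat (R v b) * b)"
      using Q.sum_representation_eq[OF indB _ finB subset_refl, of v] that spanB by (simp add: R_def)
    also have "\<dots> = sum_list (map (\<lambda>b. of_rat (R v b) * b) bs)"
      using bsd by (metis sum.distinct_set_conv_list)
    also have "\<dots> = (\<Sum>l<d. of_rat (R v (bs ! l)) * bs ! l)"
      by (simp add: sum_list_sum_nth d_def atLeast0LessThan)
    finally show ?thesis .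
  qed
  have Radd: "R (x + y) = (\<lambda>b. R x b + R y b)" if "x \<in> V" "y \<in> V" for x y
    using Q.representation_add[OF indB] that spanB by (simp add: R_def add.commute)
  have Rscale: "R (of_rat c * x) = (\<lambda>b. c * R x b)" if "x \<in> V" for c x
    using Q.representation_scale[OF indB] that spanB by (simp add: R_def)
  have Rsum: "R (\<Sum>l\<in>I. f l) = (\<lambda>b. \<Sum>l\<in>I. R (f l) b)" if "\<And>l. l \<in> I \<Longrightarrow> f l \<in> V" for I f
    using Q.representation_sum[OF indB, of I f] that spanB unfolding R_def by blast
  have scaleV: "of_rat c * x \<in> V" if "x \<in> V" for c x using that by (simp add: V_def Q.span_scale)
  have multV: "x * y \<in> V" if "x \<in> V" "y \<in> V" for x y using mult that by (simp add: V_def)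
  define \<tau> where "\<tau> w = (\<Sum>i<d. R (w * bs ! i) (bs ! i))" for w
  define Mt where "Mt w = mat d d (\<lambda>(i,j). R (w * bs ! j) (bs ! i))" for w
  have Mtc: "Mt w \<in> carrier_mat d d" for w by (simp add: Mt_def)
  have Mtr: "(\<Sum>i<d. Mt w $$ (i,i)) = \<tau> w" for w by (simp add: Mt_def \<tau>_def)
  have Mmult: "Mt (x * y) = Mt x * Mt y" if "x \<in> V" "y \<in> V" for x y
  proof (rule eq_matI)
    fix i j assume ij: "i < dim_row (Mt x * Mt y)" "j < dim_col (Mt x * Mt y)"
    then have i: "i < d" and j: "j < d" by (auto simp: Mt_def)
    have ybj: "y * bs ! j \<in> V" using multV[OF that(2) bsV[OF j]] .
    have "x * y * bs ! j = x * (\<Sum>l<d. of_rat (R (y * bs ! j) (bs ! l)) * bs ! l)"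
      using coord[OF ybj] by (simp add: mult.assoc)
    also have "\<dots> = (\<Sum>l<d. of_rat (R (y * bs ! j) (bs ! l)) * (x * bs ! l))"
      by (simp add: sum_distrib_left mult.left_commute)
    finally have xyb: "x * y * bs ! j = (\<Sum>l<d. of_rat (R (y * bs ! j) (bs ! l)) * (x * bs ! l))" .
    have mem: "of_rat (R (y * bs ! j) (bs ! l)) * (x * bs ! l) \<in> V" if "l \<in> {..<d}" for l
      using scaleV multV[OF \<open>x \<in> V\<close> bsV] that by simp
    have "R (x * y * bs ! j) (bs ! i) = (\<Sum>l<d. R (of_rat (R (y * bs ! j) (bs ! l)) * (x * bs ! l)) (bs ! i))"
      unfolding xyb by (simp only: Rsum[OF mem])
    also have "\<dots> = (\<Sum>l<d. R (y * bs ! j) (bs ! l) * R (x * bs ! l) (bs ! i))"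
      by (rule sum.cong) (auto simp: Rscale multV[OF that(1) bsV])
    finally have "Mt (x * y) $$ (i, j) = (\<Sum>l<d. R (x * bs ! l) (bs ! i) * R (y * bs ! j) (bs ! l))"
      using i j by (simp add: Mt_def mult.commute)
    also have "\<dots> = (Mt x * Mt y) $$ (i, j)"
      using i j by (simp add: Mt_def scalar_prod_def atLeast0LessThan)
    finally show "Mt (x * y) $$ (i, j) = (Mt x * Mt y) $$ (i, j)" .
  qed (auto simp: Mt_def)
  have Mconst: "Mt (of_rat c) = c \<cdot>\<^sub>m 1\<^sub>m d" for c
  proof (rule eq_matI)
    fix i j assume ij: "i < dim_row (c \<cdot>\<^sub>m 1\<^sub>m d)" "j < dim_col (c \<cdot>\<^sub>m 1\<^sub>m d)"
    then have i: "i < d" and j: "j < d" by auto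
    have "R (of_rat c * bs ! j) (bs ! i) = c * R (bs ! j) (bs ! i)" using Rscale bsV[OF j] by simp
    then show "Mt (of_rat c) $$ (i, j) = (c \<cdot>\<^sub>m 1\<^sub>m d) $$ (i, j)"
      using i j Rb[OF j i] by (simp add: Mt_def)
  qed (auto simp: Mt_def)
  have oneV: "1 \<in> V" using one by (simp add: V_def)
  have powV: "z ^ m \<in> V" if "z \<in> V" for z m
    by (induction m) (auto simp: oneV multV that)
  have Mpow: "Mt (z ^ m) = Mt z ^\<^sub>m m" if "z \<in> V" for z m
  proof (induction m)
    case 0
    have "Mt 1 = 1 \<cdot>\<^sub>m 1\<^sub>m d" using Mconst[of 1] by simp
    also have "\<dots> = 1\<^sub>m d" by (rule eq_matI) auto
    finally show ?case by (simp add: Mt_def)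
  next
    case (Suc m)
    have "Mt (z ^ Suc m) = Mt (z ^ m * z)" by (simp add: mult.commute)
    also have "\<dots> = Mt (z ^ m) * Mt z" using Mmult powV that by blast
    finally show ?case using Suc by simp
  qed
  have d0: "d > 0"
  proof (rule ccontr)
    assume "\<not> d > 0"
    then have "B = {}" using bsd d_def by auto
    then show False using oneV VB by auto
  qed
  have t1: "\<tau> 1 \<noteq> 0"
  proof -
    have "\<tau> 1 = (\<Sum>i<d. 1)" unfolding \<tau>_def by (rule sum.cong) (auto simp: Rb)
    then show ?thesis using d0 by simp
  qed
  have tadd: "\<tau> (x + y) = \<tau> x + \<tau> y" if "x \<in> V" "y \<in> V" for x y
    unfolding \<tau>_def by (simp add: distrib_right Radd multV that bsV sum.distrib)
  have tscale: "\<tau> (of_rat c * x) = c * \<tau> x" if "x \<in> V" for c x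
    unfolding \<tau>_def by (simp add: mult.assoc Rscale multV that bsV sum_distrib_left)
  have tzero: "\<tau> z = 0" if z: "z \<in> V" "z > 0" "\<exists>m>0. z ^ m \<in> \<rat>" "z \<notin> \<rat>" for z
  proof -
    define t where "t = (LEAST t. 0 < t \<and> z ^ t \<in> \<rat>)"
    have tt: "0 < t \<and> z ^ t \<in> \<rat>" unfolding t_def using z(3) by (metis (mono_tags, lifting) LeastI_ex)
    have tmin: "z ^ s \<notin> \<rat>" if "0 < s" "s < t" for s
      using not_less_Least[of s "\<lambda>t. 0 < t \<and> z ^ t \<in> \<rat>"] that t_def by blast
    have t2: "t \<ge> 2"
    proof (rule ccontr)
      assume "\<not> t \<ge> 2"
      then have "t = 1" using tt by simp
      then show False using tt z(4) by simp
    qed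
    obtain c where c: "z ^ t = of_rat c" using tt by (metis Rats_cases)
    have P: "poly (map_poly of_rat g) l \<noteq> 0" if "g \<noteq> 0" "degree g < t" "(l::complex) ^ t = of_rat c" for g l
      using no_small_root[OF z(2) _ c tmin that] tt by blast
    have Mz: "Mt z ^\<^sub>m t = c \<cdot>\<^sub>m 1\<^sub>m d" using Mpow[OF z(1)] c Mconst by metis
    have "(\<Sum>i<d. Mt z $$ (i,i)) = 0"
      by (rule trace_zero_rad[OF Mtc d0 t2 Mz P])
    then show ?thesis using Mtr by simp
  qed
  show ?thesis
    by (rule exI[of _ \<tau>]) (use t1 tadd tscale tzero in \<open>auto simp: V_def\<close>)
qed

definition goodN :: "nat \<Rightarrow> nat \<Rightarrow> bool" where
  "goodN k N \<longleftrightarrow> N > 0 \<and> (\<forall>p. prime p \<longrightarrow> multiplicity p N = 0 \<or> (k < multiplicity p N \<and> multiplicity p N < 2 * k))"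

lemma sum_le1_cases:
  fixes m :: "nat \<Rightarrow> nat"
  assumes fin: "finite I" and le: "(\<Sum>i\<in>I. m i) \<le> 1"
  shows "(\<forall>i\<in>I. m i = 0) \<or> (\<exists>i0\<in>I. m i0 = 1 \<and> (\<forall>i\<in>I - {i0}. m i = 0))"
proof (cases "\<forall>i\<in>I. m i = 0")
  case False
  then obtain i0 where i0: "i0 \<in> I" "m i0 \<noteq> 0" by blast
  have "(\<Sum>i\<in>I. m i) = m i0 + (\<Sum>i\<in>I - {i0}. m i)" using fin i0(1) by (simp add: sum.remove)
  then have "m i0 = 1" "(\<Sum>i\<in>I - {i0}. m i) = 0" using le i0(2) by linarith+
  then show ?thesis using i0(1) fin by auto
qed simp

lemma Lambda_good:
  assumes k: "k \<ge> 2" and lam: "l \<in> Lambda k"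
  shows "\<exists>N. goodN k N \<and> N \<ge> 2 \<and> l > 0 \<and> l ^ k = real N"
proof -
  obtain b :: "nat \<Rightarrow> nat" where l: "l = root k (\<Prod>i\<in>{1..k-1}. real (b i) ^ (k + i))"
    and b1: "\<forall>i\<in>{1..k-1}. b i \<ge> 1" and b2: "(\<Prod>i\<in>{1..k-1}. b i) \<ge> 2"
    and sf: "squarefree (\<Prod>i\<in>{1..k-1}. b i)"
    using lam unfolding Lambda_def by blast
  define N where "N = (\<Prod>i\<in>{1..k-1}. b i ^ (k + i))"
  have rN: "real N = (\<Prod>i\<in>{1..k-1}. real (b i) ^ (k + i))" by (simp add: N_def)
  have "(\<Prod>i\<in>{1..k-1}. b i) \<le> N"
    unfolding N_def
  proof (rule prod_mono)
    fix i assume "i \<in> {1..k-1}"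
    then have "b i \<ge> 1" using b1 by blast
    then show "0 \<le> b i \<and> b i \<le> b i ^ (k + i)" using k by (simp add: self_le_power)
  qed
  then have N2: "N \<ge> 2" using b2 by simp
  have lN: "l = root k (real N)" using l rN by simp
  have lk: "l ^ k = real N" using k N2 unfolding lN by (intro real_root_pow_pos2) auto
  have lpos: "l > 0" using k N2 unfolding lN by simp
  have b0: "0 \<notin> b ` {1..k-1}" using b1 by force
  have good: "goodN k N"
    unfolding goodN_def
  proof (intro conjI allI impI)
    show "N > 0" using N2 by simp
    fix p :: nat assume p: "prime p"
    define m where "m i = multiplicity p (b i)" for i
    have "multiplicity p (\<Prod>i\<in>{1..k-1}. b i) \<le> 1"
      using sf b2 p squarefree_factorial_semiring'' by (metis not_numeral_le_zero)
    then have "(\<Sum>i\<in>{1..k-1}. m i) \<le> 1"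
      using prime_elem_multiplicity_prod_distrib[of p b "{1..k-1}"] p b0 by (simp add: m_def)
    then have cases: "(\<forall>i\<in>{1..k-1}. m i = 0) \<or> (\<exists>i0\<in>{1..k-1}. m i0 = 1 \<and> (\<forall>i\<in>{1..k-1} - {i0}. m i = 0))"
      by (intro sum_le1_cases) auto
    have mN: "multiplicity p N = (\<Sum>i\<in>{1..k-1}. (k + i) * m i)"
    proof -
      have "multiplicity p N = (\<Sum>i\<in>{1..k-1}. multiplicity p (b i ^ (k + i)))"
        unfolding N_def using p b0 by (intro prime_elem_multiplicity_prod_distrib) auto
      also have "\<dots> = (\<Sum>i\<in>{1..k-1}. (k + i) * m i)"
      proof (rule sum.cong)
        fix i assume "i \<in> {1..k-1}"
        then have "b i \<noteq> 0" using b0 by force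
        then show "multiplicity p (b i ^ (k + i)) = (k + i) * m i"
          using p by (simp add: m_def prime_elem_multiplicity_power_distrib)
      qed simp
      finally show ?thesis .
    qed
    show "multiplicity p N = 0 \<or> k < multiplicity p N \<and> multiplicity p N < 2 * k"
      using cases
    proof
      assume "\<forall>i\<in>{1..k-1}. m i = 0"
      then show ?thesis using mN by simp
    next
      assume "\<exists>i0\<in>{1..k-1}. m i0 = 1 \<and> (\<forall>i\<in>{1..k-1} - {i0}. m i = 0)"
      then obtain i0 where i0: "i0 \<in> {1..k-1}" "m i0 = 1" "\<forall>i\<in>{1..k-1} - {i0}. m i = 0" by blast
      have "multiplicity p N = (k + i0) * m i0 + (\<Sum>i\<in>{1..k-1} - {i0}. (k + i) * m i)"
        using mN i0(1) by (simp add: sum.remove)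
      also have "\<dots> = k + i0" using i0 by simp
      finally show ?thesis using i0(1) by auto
    qed
  qed
  show ?thesis using good N2 lpos lk by blast
qed

lemma int_mult_small:
  fixes k :: nat and y x :: int
  assumes "k > 0" "int k * y = x" "\<bar>x\<bar> < 2 * int k"
  shows "\<bar>x\<bar> = 0 \<or> \<bar>x\<bar> = int k"
proof -
  have ax: "\<bar>x\<bar> = int k * \<bar>y\<bar>" by (subst assms(2)[symmetric]) (simp add: abs_mult)
  have "\<bar>y\<bar> < 2"
  proof (rule ccontr)
    assume "\<not> \<bar>y\<bar> < 2"
    then have "int k * 2 \<le> int k * \<bar>y\<bar>" using assms(1) by (intro mult_left_mono) auto
    then show False using ax assms(3) by linarith
  qed
  then have "\<bar>y\<bar> = 0 \<or> \<bar>y\<bar> = 1" by auto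
  then show ?thesis using ax by auto
qed

lemma goodN_eq:
  assumes k: "k > 0" and g1: "goodN k N1" and g2: "goodN k N2" and a: "a > 0" and b: "b > 0"
    and eq: "N1 * b ^ k = a ^ k * N2"
  shows "N1 = N2"
proof -
  have N1: "N1 > 0" and N2: "N2 > 0" using g1 g2 by (auto simp: goodN_def)
  have "normalize N1 = normalize N2"
  proof (rule multiplicity_eq_imp_eq)
    show "N1 \<noteq> 0" "N2 \<noteq> 0" using N1 N2 by auto
    fix p :: nat assume p: "prime p"
    define v1 where "v1 = multiplicity p N1"
    define v2 where "v2 = multiplicity p N2"
    define va where "va = multiplicity p a"
    define vb where "vb = multiplicity p b"
    have "multiplicity p (N1 * b ^ k) = multiplicity p (a ^ k * N2)" using eq by simp
    then have e: "v1 + k * vb = k * va + v2"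
      using p N1 N2 a b by (simp add: prime_elem_multiplicity_mult_distrib prime_elem_multiplicity_power_distrib v1_def v2_def va_def vb_def)
    then have e': "int k * (int va - int vb) = int v1 - int v2" by (simp add: algebra_simps) (metis of_nat_add of_nat_mult add.commute)
    have z1: "v1 = 0 \<or> (k < v1 \<and> v1 < 2 * k)" and z2: "v2 = 0 \<or> (k < v2 \<and> v2 < 2 * k)"
      using g1 g2 p by (auto simp: goodN_def v1_def v2_def)
    have "\<bar>int v1 - int v2\<bar> < 2 * int k" using z1 z2 k by auto
    then have "\<bar>int v1 - int v2\<bar> = 0 \<or> \<bar>int v1 - int v2\<bar> = int k" using int_mult_small[OF k e'] by blast
    then show "multiplicity p N1 = multiplicity p N2" using z1 z2 by (auto simp: v1_def[symmetric] v2_def[symmetric])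
  qed
  then show ?thesis by simp
qed

lemma ratio_rat_eq:
  fixes l1 l2 :: real
  assumes k: "k > 0" and g1: "goodN k N1" and g2: "goodN k N2"
    and l1: "l1 > 0" "l1 ^ k = real N1" and l2: "l2 > 0" "l2 ^ k = real N2"
    and rat: "l1 * inverse l2 \<in> \<rat>"
  shows "N1 = N2"
proof -
  obtain a b :: int where b: "b > 0" and x: "l1 * inverse l2 = of_int a / of_int b"
    using rat by (metis Rats_cases')
  have "l1 * inverse l2 > 0" using l1 l2 by simp
  then have a: "a > 0" using x b by (simp add: zero_less_divide_iff)
  have "l1 * of_int b = of_int a * l2" using x l2 b by (simp add: field_simps)
  then have "(l1 * of_int b) ^ k = (of_int a * l2) ^ k" by simp
  then have "l1 ^ k * of_int b ^ k = of_int a ^ k * l2 ^ k" by (simp add: power_mult_distrib)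
  then have "real N1 * real (nat b) ^ k = real (nat a) ^ k * real N2" using l1 l2 a b by simp
  then have "N1 * nat b ^ k = nat a ^ k * N2" by (metis of_nat_eq_iff of_nat_mult of_nat_power)
  moreover have "nat a > 0" "nat b > 0" using a b by auto
  ultimately show ?thesis using goodN_eq[OF k g1 g2] by blast
qed

lemma goodN_one: "goodN k 1" by (simp add: goodN_def)

theorem mainTheorem5:
  fixes k n :: nat and lam :: "nat \<Rightarrow> real"
  assumes "k \<ge> 2"
    and "\<forall>i\<in>{1..n}. lam i \<in> Lambda k"
    and "inj_on lam {1..n}"
  shows "\<forall>q :: nat \<Rightarrow> rat.
           of_rat (q 0) + (\<Sum>i=1..n. of_rat (q i) * inverse (lam i)) = (0::real)
           \<longrightarrow> (\<forall>i\<in>{0..n}. q i = 0)"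
proof (intro allI impI)
  fix q :: "nat \<Rightarrow> rat"
  assume rel: "of_rat (q 0) + (\<Sum>i=1..n. of_rat (q i) * inverse (lam i)) = (0::real)"
  have k0: "k > 0" using assms(1) by simp
  have "\<forall>i\<in>{1..n}. \<exists>N. goodN k N \<and> N \<ge> 2 \<and> lam i > 0 \<and> lam i ^ k = real N"
    using Lambda_good assms(1,2) by blast
  then obtain N where N: "\<And>i. i \<in> {1..n} \<Longrightarrow> goodN k (N i) \<and> N i \<ge> 2 \<and> lam i > 0 \<and> lam i ^ k = real (N i)"
    by metis
  define u where "u i = inverse (lam i)" for i
  define mono where "mono a = (\<Prod>i\<in>{1..n}. u i ^ a i)" for a :: "nat \<Rightarrow> nat"
  define S where "S = mono ` ({1..n} \<rightarrow>\<^sub>E {..<k})"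
  have finS: "finite S" unfolding S_def by (intro finite_imageI finite_PiE) auto
  define qq where "qq i = inverse (of_nat (N i) :: rat)" for i
  have uk: "u i ^ k = of_rat (qq i)" if "i \<in> {1..n}" for i
    using N[OF that] by (simp add: u_def qq_def power_inverse of_rat_inverse)
  have usplit: "u i ^ m = of_rat (qq i ^ (m div k)) * u i ^ (m mod k)" if "i \<in> {1..n}" for i m
  proof -
    have m: "m = k * (m div k) + m mod k" by simp
    have e: "u i ^ m = (u i ^ k) ^ (m div k) * u i ^ (m mod k)"
      by (subst m) (simp only: power_add power_mult)
    show ?thesis unfolding e uk[OF that] by (simp add: of_rat_power)
  qed
  have monomult: "mono a * mono b \<in> Q.span S" if "a \<in> {1..n} \<rightarrow>\<^sub>E {..<k}" "b \<in> {1..n} \<rightarrow>\<^sub>E {..<k}" for a b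
  proof -
    define c where "c = (\<lambda>i\<in>{1..n}. (a i + b i) mod k)"
    have c: "c \<in> {1..n} \<rightarrow>\<^sub>E {..<k}" using k0 by (auto simp: c_def)
    have "mono a * mono b = (\<Prod>i\<in>{1..n}. u i ^ (a i + b i))"
      by (simp add: mono_def power_add prod.distrib)
    also have "\<dots> = (\<Prod>i\<in>{1..n}. of_rat (qq i ^ ((a i + b i) div k)) * u i ^ c i)"
    proof (rule prod.cong)
      fix i assume i: "i \<in> {1..n}"
      show "u i ^ (a i + b i) = of_rat (qq i ^ ((a i + b i) div k)) * u i ^ c i"
        unfolding usplit[OF i, of "a i + b i"] using i by (simp add: c_def)
    qed simp
    also have "\<dots> = of_rat (\<Prod>i\<in>{1..n}. qq i ^ ((a i + b i) div k)) * mono c"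
      by (simp add: prod.distrib mono_def of_rat_prod)
    finally have "mono a * mono b = of_rat (\<Prod>i\<in>{1..n}. qq i ^ ((a i + b i) div k)) * mono c" .
    moreover have "mono c \<in> Q.span S" using c by (auto simp: S_def intro: Q.span_base)
    ultimately show ?thesis by (simp add: Q.span_scale)
  qed
  have Smult: "s * y \<in> Q.span S" if "s \<in> S" "y \<in> Q.span S" for s y
    using that(2)
  proof (induction rule: Q.span_induct_alt)
    case base
    then show ?case by (simp add: Q.span_zero)
  next
    case (step c x y)
    have "s * (of_rat c * x + y) = of_rat c * (s * x) + s * y" by (simp add: algebra_simps)
    moreover have "s * x \<in> Q.span S" using monomult that(1) step(1) by (auto simp: S_def)
    ultimately show ?case using step(2) by (simp add: Q.span_add Q.span_scale)
  qed
  have mult: "x * y \<in> Q.span S" if "x \<in> Q.span S" "y \<in> Q.span S" for x y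
    using that(1)
  proof (induction rule: Q.span_induct_alt)
    case base
    then show ?case by (simp add: Q.span_zero)
  next
    case (step c s x)
    have "(of_rat c * s + x) * y = of_rat c * (s * y) + x * y" by (simp add: algebra_simps)
    then show ?case using step Smult[OF step(1) that(2)] by (simp add: Q.span_add Q.span_scale)
  qed
  have zeroE: "(\<lambda>i\<in>{1..n}. 0) \<in> {1..n} \<rightarrow>\<^sub>E {..<k}" using k0 by auto
  have one: "1 \<in> Q.span S"
  proof -
    have "mono (\<lambda>i\<in>{1..n}. 0) = 1" by (simp add: mono_def)
    then show ?thesis using zeroE by (metis S_def Q.span_base image_eqI)
  qed
  have upow: "u j ^ m \<in> Q.span S" if "j \<in> {1..n}" "m < k" for j m
  proof -
    define a where "a = (\<lambda>i\<in>{1..n}. if i = j then m else 0)"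
    have a: "a \<in> {1..n} \<rightarrow>\<^sub>E {..<k}" using that k0 by (auto simp: a_def)
    have "mono a = (\<Prod>i\<in>{1..n}. if i = j then u j ^ m else 1)"
      unfolding mono_def by (rule prod.cong) (auto simp: a_def)
    also have "\<dots> = u j ^ m" using that(1) by (simp add: prod.delta)
    finally show ?thesis using a by (metis S_def Q.span_base image_eqI)
  qed
  have uV: "u j \<in> Q.span S" if "j \<in> {1..n}" for j using upow[OF that, of 1] assms(1) by simp
  have lamV: "lam j \<in> Q.span S" if "j \<in> {1..n}" for j
  proof -
    have eqlam: "lam j = of_rat (of_nat (N j)) * u j ^ (k - 1)"
    proof -
      have lp: "lam j > 0" using N[OF that] by simp
      have "u j ^ (k - 1) * lam j ^ k = lam j"
        using k0 lp by (simp add: u_def power_inverse field_simps) (metis One_nat_def Suc_pred power_Suc)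
      then show ?thesis using N[OF that] by (simp add: mult.commute)
    qed
    show ?thesis
      by (subst eqlam, rule Q.span_scale) (use upow[OF that, of "k - 1"] k0 in simp)
  qed
  obtain \<tau> :: "real \<Rightarrow> rat" where t1: "\<tau> 1 \<noteq> 0"
    and tadd: "\<And>x y. x \<in> Q.span S \<Longrightarrow> y \<in> Q.span S \<Longrightarrow> \<tau> (x + y) = \<tau> x + \<tau> y"
    and tscale: "\<And>c x. x \<in> Q.span S \<Longrightarrow> \<tau> (of_rat c * x) = c * \<tau> x"
    and tzero: "\<And>z. z \<in> Q.span S \<Longrightarrow> z > 0 \<Longrightarrow> (\<exists>m>0. z ^ m \<in> \<rat>) \<Longrightarrow> z \<notin> \<rat> \<Longrightarrow> \<tau> z = 0"
    using trace_functional[OF finS one mult] by blast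
  have t0: "\<tau> 0 = 0" using tscale[OF one, of 0] by simp
  have tsum: "\<tau> (\<Sum>i\<in>I. of_rat (c i) * f i) = (\<Sum>i\<in>I. c i * \<tau> (f i))"
    if "finite I" "\<And>i. i \<in> I \<Longrightarrow> f i \<in> Q.span S" for I c f
    using that
  proof (induction I rule: finite_induct)
    case empty
    then show ?case using t0 by simp
  next
    case (insert x F)
    have "(\<Sum>i\<in>F. of_rat (c i) * f i) \<in> Q.span S"
      using insert by (intro Q.span_sum Q.span_scale) auto
    then show ?case using insert by (simp add: tadd Q.span_scale tscale)
  qed
  have good: "goodN k (N i)" "N i \<ge> 2" "lam i > 0" "lam i ^ k = real (N i)" if "i \<in> {1..n}" for i
    using N[OF that] by auto
  have tu: "\<tau> (u i) = 0" if i: "i \<in> {1..n}" for i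
  proof (rule tzero[OF uV[OF i]])
    show "u i > 0" using good(3)[OF i] by (simp add: u_def)
    show "\<exists>m>0. u i ^ m \<in> \<rat>" using uk[OF i] k0 by auto
    show "u i \<notin> \<rat>"
    proof
      assume "u i \<in> \<rat>"
      then have "1 * inverse (lam i) \<in> \<rat>" by (simp add: u_def)
      then have "1 = N i" using ratio_rat_eq[OF k0 goodN_one good(1)[OF i], of 1 "lam i"] good(3,4)[OF i] by simp
      then show False using good(2)[OF i] by simp
    qed
  qed
  have tlam: "\<tau> (lam j) = 0" if j: "j \<in> {1..n}" for j
  proof (rule tzero[OF lamV[OF j]])
    show "lam j > 0" using good(3)[OF j] .
    show "\<exists>m>0. lam j ^ m \<in> \<rat>" using good(4)[OF j] k0 by (metis Rats_of_nat)
    show "lam j \<notin> \<rat>"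
    proof
      assume "lam j \<in> \<rat>"
      then have "lam j * inverse 1 \<in> \<rat>" by simp
      then have "N j = 1" using ratio_rat_eq[OF k0 good(1)[OF j] goodN_one good(3,4)[OF j], of 1] by simp
      then show False using good(2)[OF j] by simp
    qed
  qed
  have tul: "\<tau> (u i * lam j) = (if i = j then \<tau> 1 else 0)" if i: "i \<in> {1..n}" and j: "j \<in> {1..n}" for i j
  proof (cases "i = j")
    case True
    then show ?thesis using good(3)[OF j] by (simp add: u_def)
  next
    case False
    have "\<tau> (u i * lam j) = 0"
    proof (rule tzero[OF mult[OF uV[OF i] lamV[OF j]]])
      show "u i * lam j > 0" using good(3)[OF i] good(3)[OF j] by (simp add: u_def)
      have "(u i * lam j) ^ k = of_rat (qq i) * real (N j)" using uk[OF i] good(4)[OF j] by (simp add: power_mult_distrib)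
      then show "\<exists>m>0. (u i * lam j) ^ m \<in> \<rat>" using k0 by (metis Rats_mult Rats_of_nat Rats_of_rat)
      show "u i * lam j \<notin> \<rat>"
      proof
        assume "u i * lam j \<in> \<rat>"
        then have "lam j * inverse (lam i) \<in> \<rat>" by (simp add: u_def mult.commute)
        then have "N j = N i" using ratio_rat_eq[OF k0 good(1)[OF j] good(1)[OF i] good(3,4)[OF j] good(3,4)[OF i]] by simp
        then have "lam j ^ k = lam i ^ k" using good(4)[OF i] good(4)[OF j] by simp
        then have "lam j = lam i" using good(3)[OF i] good(3)[OF j] k0 by (metis less_imp_le power_eq_imp_eq_base)
        then show False using assms(3) i j False by (metis inj_onD)
      qed
    qed
    then show ?thesis using False by simp
  qed
  define E where "E = (\<Sum>i\<in>{1..n}. of_rat (q i) * u i)"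
  have EV: "E \<in> Q.span S" unfolding E_def using uV by (intro Q.span_sum Q.span_scale) auto
  have relE: "of_rat (q 0) * 1 + E = 0" using rel by (simp add: E_def u_def)
  have "\<tau> (of_rat (q 0) * 1 + E) = q 0 * \<tau> 1 + (\<Sum>i\<in>{1..n}. q i * \<tau> (u i))"
    using tadd[OF Q.span_scale[OF one] EV] tscale[OF one] tsum[of "{1..n}" u q] uV by (simp add: E_def)
  then have "q 0 * \<tau> 1 = 0" using relE t0 tu by simp
  then have q0: "q 0 = 0" using t1 by simp
  have qj: "q j = 0" if j: "j \<in> {1..n}" for j
  proof -
    have "(of_rat (q 0) * 1 + E) * lam j = of_rat (q 0) * lam j + (\<Sum>i\<in>{1..n}. of_rat (q i) * (u i * lam j))"
      by (simp add: E_def distrib_right sum_distrib_right mult.assoc)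
    then have eq0: "of_rat (q 0) * lam j + (\<Sum>i\<in>{1..n}. of_rat (q i) * (u i * lam j)) = 0" using relE by simp
    have mem: "u i * lam j \<in> Q.span S" if "i \<in> {1..n}" for i using mult[OF uV[OF that] lamV[OF j]] .
    have "\<tau> (of_rat (q 0) * lam j + (\<Sum>i\<in>{1..n}. of_rat (q i) * (u i * lam j)))
        = q 0 * \<tau> (lam j) + (\<Sum>i\<in>{1..n}. q i * \<tau> (u i * lam j))"
    proof -
      have "(\<Sum>i\<in>{1..n}. of_rat (q i) * (u i * lam j)) \<in> Q.span S"
        using mem by (intro Q.span_sum Q.span_scale) auto
      then show ?thesis
        using tadd[OF Q.span_scale[OF lamV[OF j]]] tscale[OF lamV[OF j]] tsum[of "{1..n}" "\<lambda>i. u i * lam j" q] mem by simp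
    qed
    also have "\<dots> = (\<Sum>i\<in>{1..n}. q i * (if i = j then \<tau> 1 else 0))"
      using tlam[OF j] tul[OF _ j] by simp
    also have "\<dots> = q j * \<tau> 1" using j by (simp add: if_distrib[of "\<lambda>x. q _ * x"] sum.delta cong: if_cong)
    finally have "q j * \<tau> 1 = 0" using eq0 t0 by simp
    then show ?thesis using t1 by simp
  qed
  show "\<forall>i\<in>{0..n}. q i = 0"
  proof
    fix i assume "i \<in> {0..n}"
    then show "q i = 0" using q0 qj by (cases "i = 0") auto
  qed
qed

end
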